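(* For every channel $\mathcal{N}\in\mathrm{CPTP}(A\to B)$, with $R$ a replica of $A$, $$\log|B|-D_{\max}(\mathcal{N}\,\|\,\mathcal{R})=\min_{\psi\in\mathrm{Pure}(RA)}H_{\min}(B|R)_{\mathcal{N}^{A\to B}(\psi^{RA})},$$ where $D_{\max}(\mathcal{N}\|\mathcal{R})=\log\min\{t\ge0: t\mathcal{R}-\mathcal{N}\text{ is completely positive}\}$, $\mathcal{R}=\mathcal{R}^{A\to B}$ is the uniform channel $\rho\mapsto\mathrm{Tr}[\rho]\mathbf{u}^B$, and for a bipartite state $\rho^{RB}$, $H_{\min}(B|R)_\rho=-D_{\max}(\rho^{RB}\|\rho^R\otimes I^B)$ with $D_{\max}(\rho\|\sigma)=\log\min\{t: t\sigma\ge\rho\}$.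
   Context: Systems are finite-dimensional, $\mathbf{u}^B=I^B/|B|$, $\log$ base 2; $\mathrm{Pure}(RA)$ is the set of pure states on $RA$; $\mathcal{N}^{A\to B}(\psi^{RA})$ means $(\mathrm{id}^R\otimes\mathcal{N})(\psi^{RA})$. *)

theory Defs
  imports Complex_Main "Jordan_Normal_Form.Matrix"
begin

(* Index convention: the composite system X (dim m) tensor Y (dim d) has basis
   index  i*d + j  for  i < m, j < d. *)

definition mtrace :: "complex mat \<Rightarrow> complex" where
  "mtrace M = (\<Sum>i < dim_row M. M $$ (i, i))"

definition quad_form :: "nat \<Rightarrow> complex mat \<Rightarrow> complex vec \<Rightarrow> complex" where
  "quad_form n M v = (\<Sum>i<n. \<Sum>j<n. cnj (v $ i) * M $$ (i, j) * v $ j)"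

definition psd :: "nat \<Rightarrow> complex mat \<Rightarrow> bool" where
  "psd n M \<longleftrightarrow> M \<in> carrier_mat n n \<and>
     (\<forall>v \<in> carrier_vec n. Im (quad_form n M v) = 0 \<and> Re (quad_form n M v) \<ge> 0)"

definition loewner_le :: "nat \<Rightarrow> complex mat \<Rightarrow> complex mat \<Rightarrow> bool" where
  "loewner_le n A B \<longleftrightarrow> A \<in> carrier_mat n n \<and> B \<in> carrier_mat n n \<and> psd n (B - A)"

definition kron :: "complex mat \<Rightarrow> complex mat \<Rightarrow> complex mat" where
  "kron A B = mat (dim_row A * dim_row B) (dim_col A * dim_col B)
     (\<lambda>(p, q). A $$ (p div dim_row B, q div dim_col B) * B $$ (p mod dim_row B, q mod dim_col B))"

definition ptrace2 :: "nat \<Rightarrow> nat \<Rightarrow> complex mat \<Rightarrow> complex mat" where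
  "ptrace2 m d M = mat m m (\<lambda>(i, j). \<Sum>b<d. M $$ (i * d + b, j * d + b))"

definition block :: "nat \<Rightarrow> complex mat \<Rightarrow> nat \<Rightarrow> nat \<Rightarrow> complex mat" where
  "block d M i j = mat d d (\<lambda>(a, b). M $$ (i * d + a, j * d + b))"

(* (id^X \<otimes> N^{A\<rightarrow>B}) applied to an operator M on X tensor A, dim X = m *)
definition id_tensor :: "nat \<Rightarrow> nat \<Rightarrow> nat \<Rightarrow> (complex mat \<Rightarrow> complex mat) \<Rightarrow> complex mat \<Rightarrow> complex mat" where
  "id_tensor m dA dB N M = mat (m * dB) (m * dB)
     (\<lambda>(p, q). N (block dA M (p div dB) (q div dB)) $$ (p mod dB, q mod dB))"

definition lin_map :: "nat \<Rightarrow> nat \<Rightarrow> (complex mat \<Rightarrow> complex mat) \<Rightarrow> bool" where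
  "lin_map dA dB N \<longleftrightarrow>
     (\<forall>X \<in> carrier_mat dA dA. N X \<in> carrier_mat dB dB) \<and>
     (\<forall>X \<in> carrier_mat dA dA. \<forall>Y \<in> carrier_mat dA dA. N (X + Y) = N X + N Y) \<and>
     (\<forall>X \<in> carrier_mat dA dA. \<forall>c. N (c \<cdot>\<^sub>m X) = c \<cdot>\<^sub>m N X)"

definition CP :: "nat \<Rightarrow> nat \<Rightarrow> (complex mat \<Rightarrow> complex mat) \<Rightarrow> bool" where
  "CP dA dB N \<longleftrightarrow> lin_map dA dB N \<and>
     (\<forall>m M. psd (m * dA) M \<longrightarrow> psd (m * dB) (id_tensor m dA dB N M))"

definition CPTP :: "nat \<Rightarrow> nat \<Rightarrow> (complex mat \<Rightarrow> complex mat) \<Rightarrow> bool" where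
  "CPTP dA dB N \<longleftrightarrow> CP dA dB N \<and> (\<forall>X \<in> carrier_mat dA dA. mtrace (N X) = mtrace X)"

definition unif_chan :: "nat \<Rightarrow> complex mat \<Rightarrow> complex mat" where
  "unif_chan dB X = (mtrace X / of_nat dB) \<cdot>\<^sub>m 1\<^sub>m dB"

definition Dmax :: "nat \<Rightarrow> complex mat \<Rightarrow> complex mat \<Rightarrow> real" where
  "Dmax n \<rho> \<sigma> = log 2 (Inf {t :: real. loewner_le n \<rho> (complex_of_real t \<cdot>\<^sub>m \<sigma>)})"

definition Hmin :: "nat \<Rightarrow> nat \<Rightarrow> complex mat \<Rightarrow> real" where
  "Hmin dR dB \<rho> = - Dmax (dR * dB) \<rho> (kron (ptrace2 dR dB \<rho>) (1\<^sub>m dB))"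

definition Dmax_chan :: "nat \<Rightarrow> nat \<Rightarrow> (complex mat \<Rightarrow> complex mat) \<Rightarrow> real" where
  "Dmax_chan dA dB N = log 2 (Inf {t :: real. t \<ge> 0 \<and>
      CP dA dB (\<lambda>X. complex_of_real t \<cdot>\<^sub>m unif_chan dB X - N X)})"

definition outer :: "complex vec \<Rightarrow> complex mat" where
  "outer v = mat (dim_vec v) (dim_vec v) (\<lambda>(i, j). v $ i * cnj (v $ j))"

definition Pure :: "nat \<Rightarrow> nat \<Rightarrow> complex mat set" where
  "Pure dR dA = {outer v | v. v \<in> carrier_vec (dR * dA) \<and> (\<Sum>i < dR * dA. (cmod (v $ i))\<^sup>2) = 1}"

end

theory Submission
  imports Defs "HOL-Library.Complex_Order"
begin

lemma sum_split: "(\<Sum>P<m*d. f P) = (\<Sum>p<m. \<Sum>b<d. f (p*d+b))" for f :: "nat \<Rightarrow> 'a::comm_monoid_add"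
proof (induction m)
  case 0 then show ?case by simp
next
  case (Suc m)
  have "{..<Suc m * d} = {..<m*d} \<union> {m*d..<m*d+d}" by auto
  then have "(\<Sum>P<Suc m*d. f P) = (\<Sum>P<m*d. f P) + (\<Sum>P\<in>{m*d..<m*d+d}. f P)"
    by (simp add: sum.union_disjoint ivl_disj_int)
  also have "(\<Sum>P\<in>{m*d..<m*d+d}. f P) = (\<Sum>b<d. f (m*d+b))"
    by (rule sum.reindex_bij_witness[of _ "\<lambda>b. m*d + b" "\<lambda>P. P - m*d"]) auto
  finally show ?case using Suc by simp
qed

lemma sum_delta1: "i < n \<Longrightarrow> (\<forall>k<n. k \<noteq> i \<longrightarrow> f k = 0) \<Longrightarrow> (\<Sum>k<n. f k) = f i"
  for f :: "nat \<Rightarrow> 'a::comm_monoid_add"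
  by (subst sum.remove[of _ i]) (auto intro!: sum.neutral)

lemma sum_delta2: "i < n \<Longrightarrow> j < n \<Longrightarrow> i \<noteq> j \<Longrightarrow> (\<forall>k<n. k \<noteq> i \<and> k \<noteq> j \<longrightarrow> f k = 0) \<Longrightarrow> (\<Sum>k<n. f k) = f i + f j"
  for f :: "nat \<Rightarrow> 'a::comm_monoid_add"
proof -
  assume a: "i < n" "j < n" "i \<noteq> j" "\<forall>k<n. k \<noteq> i \<and> k \<noteq> j \<longrightarrow> f k = 0"
  have "(\<Sum>k<n. f k) = (\<Sum>k\<in>{i,j}. f k)"
    by (rule sum.mono_neutral_right) (use a in auto)
  then show ?thesis using a by simp
qed

lemma cle_iff: "(0::complex) \<le> z \<longleftrightarrow> Im z = 0 \<and> Re z \<ge> 0"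
  by (auto simp: less_eq_complex_def)

lemma psd_iff: "psd n M \<longleftrightarrow> M \<in> carrier_mat n n \<and> (\<forall>v\<in>carrier_vec n. 0 \<le> quad_form n M v)"
  by (auto simp: psd_def less_eq_complex_def)

lemma qf1: "i < n \<Longrightarrow> quad_form n M (vec n (\<lambda>l. if l = i then a else 0)) = cnj a * M$$(i,i) * a"
  unfolding quad_form_def
  by (subst sum_delta1[of i], simp, simp, subst sum_delta1[of i], auto)

lemma qf2: "i < n \<Longrightarrow> j < n \<Longrightarrow> i \<noteq> j \<Longrightarrow>
  quad_form n M (vec n (\<lambda>l. if l = i then a else if l = j then c else 0)) =
   cnj a * M$$(i,i) * a + cnj a * M$$(i,j) * c + (cnj c * M$$(j,i) * a + cnj c * M$$(j,j) * c)"
  unfolding quad_form_def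
  apply (subst sum_delta2[of i _ j], simp, simp, simp, simp)
  apply (subst sum_delta2[of i _ j], simp, simp, simp, simp)
  apply (simp)
  done

lemma psd_diag: "psd n M \<Longrightarrow> i < n \<Longrightarrow> 0 \<le> M$$(i,i)"
proof -
  assume a: "psd n M" "i < n"
  have "0 \<le> quad_form n M (vec n (\<lambda>l. if l = i then 1 else 0))" using a psd_iff vec_carrier by blast
  then show ?thesis using qf1[of i n M 1] a by simp
qed

lemma psd_herm: assumes "psd n M" "i < n" "j < n" shows "M$$(j,i) = cnj (M$$(i,j))"
proof (cases "i = j")
  case True
  then show ?thesis using psd_diag[OF assms(1,2)] by (auto simp: cle_iff complex_eq_iff)
next
  case False
  have v: "vec n f \<in> carrier_vec n" for f by simp
  have d1: "0 \<le> M$$(i,i)" "0 \<le> M$$(j,j)" using psd_diag assms by auto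
  have "0 \<le> quad_form n M (vec n (\<lambda>l. if l = i then 1 else if l = j then 1 else 0))"
    using assms v by (auto simp: psd_iff)
  then have h1: "0 \<le> cnj 1 * M$$(i,i) * 1 + cnj 1 * M$$(i,j) * 1 + (cnj 1 * M$$(j,i) * 1 + cnj 1 * M$$(j,j) * 1)" using qf2[OF assms(2,3) False, of M 1 1] by metis
  have "0 \<le> quad_form n M (vec n (\<lambda>l. if l = i then 1 else if l = j then \<i> else 0))"
    using assms v by (auto simp: psd_iff)
  then have h2: "0 \<le> cnj 1 * M$$(i,i) * 1 + cnj 1 * M$$(i,j) * \<i> + (cnj \<i> * M$$(j,i) * 1 + cnj \<i> * M$$(j,j) * \<i>)" using qf2[OF assms(2,3) False, of M 1 \<i>] by metis
  show ?thesis using h1 h2 d1 by (auto simp: cle_iff complex_eq_iff)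
qed

lemma psd_zero_row: assumes "psd n M" "k < n" "j < n" "M$$(k,k) = 0" shows "M$$(k,j) = 0"
proof (rule ccontr)
  assume ne: "M$$(k,j) \<noteq> 0"
  then have kj: "k \<noteq> j" using assms by auto
  define y where "y = M$$(k,j)"
  have herm: "M$$(j,k) = cnj y" using psd_herm[OF assms(1,2,3)] y_def by simp
  have dj: "0 \<le> M$$(j,j)" using psd_diag assms by auto
  define s where "s = (Re (M$$(j,j)) + 1) / (cmod y)^2"
  define c where "c = - complex_of_real s * y"
  have "0 \<le> quad_form n M (vec n (\<lambda>l. if l = j then 1 else if l = k then c else 0))"
    using assms by (auto simp: psd_iff)
  also have "\<dots> = M$$(j,j) + cnj y * c + cnj c * y"
    using qf2[OF assms(3,2) kj[symmetric], of M 1 c] assms(4) herm y_def by simp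
  finally have "0 \<le> M$$(j,j) + cnj y * c + cnj c * y" .
  moreover have "cnj y * c + cnj c * y = - complex_of_real (2 * s * (cmod y)^2)"
    unfolding c_def using complex_norm_square[of y] by (simp add: algebra_simps)
  ultimately have "0 \<le> M$$(j,j) - complex_of_real (2 * s * (cmod y)^2)" by (metis add.assoc diff_conv_add_uminus)
  then have "0 \<le> Re (M$$(j,j)) - 2 * s * (cmod y)^2" by (simp add: cle_iff)
  moreover have "s * (cmod y)^2 = Re (M$$(j,j)) + 1" using ne y_def s_def by simp
  ultimately show False using dj by (simp add: cle_iff)
qed

definition Bf :: "nat \<Rightarrow> complex mat \<Rightarrow> (nat \<Rightarrow> complex) \<Rightarrow> (nat \<Rightarrow> complex) \<Rightarrow> complex" where
  "Bf n M f g = (\<Sum>i<n. \<Sum>j<n. cnj (f i) * M$$(i,j) * g j)"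

lemma qf_Bf: "quad_form n M v = Bf n M (\<lambda>i. v$i) (\<lambda>i. v$i)"
  by (simp add: quad_form_def Bf_def)

lemma Bf_add: "Bf n M (\<lambda>i. f i + g i) (\<lambda>i. f i + g i) = Bf n M f f + Bf n M f g + Bf n M g f + Bf n M g g"
  by (simp add: Bf_def algebra_simps sum.distrib)

lemma Bf_dr: "k < n \<Longrightarrow> Bf n M f (\<lambda>j. if j = k then c else 0) = (\<Sum>i<n. cnj (f i) * M$$(i,k)) * c"
  unfolding Bf_def sum_distrib_right
  by (rule sum.cong, simp, subst sum_delta1[of k], auto)

lemma Bf_dl: "k < n \<Longrightarrow> Bf n M (\<lambda>j. if j = k then c else 0) g = cnj c * (\<Sum>j<n. M$$(k,j) * g j)"
  unfolding Bf_def sum_distrib_left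
  by (subst sum_delta1[of k], auto simp: mult.assoc)

lemma Bf_dd: "k < n \<Longrightarrow> Bf n M (\<lambda>j. if j = k then c else 0) (\<lambda>j. if j = k then c else 0) = cnj c * M$$(k,k) * c"
  unfolding Bf_def
  by (subst sum_delta1[of k], simp, simp, subst sum_delta1[of k], auto)

lemma sum_dl: "k < n \<Longrightarrow> (\<Sum>i<n. cnj (if i = k then c else 0) * g i) = cnj c * g k" for k n :: nat
  by (subst sum_delta1[of k]) auto

lemma psd_decomp_aux:
  assumes "k \<le> n"
  shows "\<forall>M. psd n M \<longrightarrow> (\<forall>i<n. \<forall>j<n. (i<k \<or> j<k) \<longrightarrow> M$$(i,j) = 0) \<longrightarrow>
     (\<exists>(r::nat) U. (\<forall>l<r. U l \<in> carrier_vec n) \<and> (\<forall>i<n. \<forall>j<n. M$$(i,j) = (\<Sum>l<r. U l $ i * cnj (U l $ j))))"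
  using assms
proof (induction k rule: inc_induct)
  case base
  show ?case
  proof (intro allI impI)
    fix M :: "complex mat" assume h: "\<forall>i<n. \<forall>j<n. (i<n \<or> j<n) \<longrightarrow> M$$(i,j) = 0"
    show "\<exists>(r::nat) U. (\<forall>l<r. U l \<in> carrier_vec n) \<and> (\<forall>i<n. \<forall>j<n. M$$(i,j) = (\<Sum>l<r. U l $ i * cnj (U l $ j)))"
      apply (rule_tac x=0 in exI) using h by auto
  qed
next
  case (step k)
  show ?case
  proof (intro allI impI)
    fix M assume M: "psd n M" and Z: "\<forall>i<n. \<forall>j<n. (i<k \<or> j<k) \<longrightarrow> M$$(i,j) = 0"
    have kn: "k < n" using step by simp
    have herm: "\<And>i j. i<n \<Longrightarrow> j<n \<Longrightarrow> M$$(j,i) = cnj (M$$(i,j))" using psd_herm M by blast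
    show "\<exists>(r::nat) U. (\<forall>l<r. U l \<in> carrier_vec n) \<and> (\<forall>i<n. \<forall>j<n. M$$(i,j) = (\<Sum>l<r. U l $ i * cnj (U l $ j)))"
    proof (cases "M$$(k,k) = 0")
      case True
      have "\<forall>i<n. \<forall>j<n. (i<Suc k \<or> j<Suc k) \<longrightarrow> M$$(i,j) = 0"
      proof (intro allI impI)
        fix i j assume ij: "i<n" "j<n" "i<Suc k \<or> j<Suc k"
        show "M$$(i,j) = 0"
        proof (cases "i = k \<or> j = k")
          case True
          then show ?thesis
          proof
            assume "i = k" then show ?thesis using psd_zero_row[OF M kn ij(2)] \<open>M$$(k,k) = 0\<close> by simp
          next
            assume "j = k" then show ?thesis using psd_zero_row[OF M kn ij(1)] \<open>M$$(k,k) = 0\<close> herm[OF kn ij(1)] by simp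
          qed
        next
          case False then show ?thesis using Z ij by auto
        qed
      qed
      then show ?thesis using step.IH M by blast
    next
      case False
      have "0 \<le> M$$(k,k)" using psd_diag M kn by blast
      then have h: "Im (M$$(k,k)) = 0" "Re (M$$(k,k)) \<ge> 0" by (auto simp: cle_iff)
      define d where "d = Re (M$$(k,k))"
      have d: "M$$(k,k) = complex_of_real d" "d > 0" using h False by (auto simp: d_def complex_eq_iff)
      define sd where "sd = complex_of_real (sqrt d)"
      have sd2: "cnj sd * sd = complex_of_real d" "cnj sd = sd" "sd \<noteq> 0"
        using d by (simp_all add: sd_def flip: of_real_mult)
      define u where "u = vec n (\<lambda>i. M$$(i,k) / sd)"
      have uu: "u$i * cnj (u$j) = M$$(i,k) * M$$(k,j) / complex_of_real d" if "i<n" "j<n" for i j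
        using that herm[OF that(2) kn] sd2 by (simp add: u_def flip: sd2(1))
      define M' where "M' = mat n n (\<lambda>(i,j). M$$(i,j) - u$i * cnj (u$j))"
      have M'c: "M' \<in> carrier_mat n n" by (simp add: M'_def)
      have M'idx: "M'$$(i,j) = M$$(i,j) - u$i * cnj (u$j)" if "i<n" "j<n" for i j
        using that by (simp add: M'_def)
      have Z': "\<forall>i<n. \<forall>j<n. (i<Suc k \<or> j<Suc k) \<longrightarrow> M'$$(i,j) = 0"
      proof (intro allI impI)
        fix i j assume ij: "i<n" "j<n" "i<Suc k \<or> j<Suc k"
        have "i < k \<or> j < k \<or> i = k \<or> j = k" using ij by auto
        then show "M'$$(i,j) = 0"
        proof (elim disjE)
          assume "i<k" then show ?thesis using Z ij kn by (simp add: M'idx uu)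
        next
          assume "j<k" then show ?thesis using Z ij kn by (simp add: M'idx uu)
        next
          assume "i=k" then show ?thesis using ij d by (simp add: M'idx uu)
        next
          assume "j=k" then show ?thesis using ij d by (simp add: M'idx uu)
        qed
      qed
      have psdM': "psd n M'"
        unfolding psd_iff
      proof (intro conjI ballI M'c)
        fix v :: "complex vec" assume v: "v \<in> carrier_vec n"
        define y where "y = (\<Sum>j<n. M$$(k,j) * v$j)"
        define c where "c = - y / complex_of_real d"
        have cy: "(\<Sum>i<n. cnj (v$i) * M$$(i,k)) = cnj y"
          unfolding y_def by (simp add: herm[OF _ kn] mult.commute)
        have "Bf n M (\<lambda>i. v$i + (if i = k then c else 0)) (\<lambda>i. v$i + (if i = k then c else 0))
            = quad_form n M v + cnj y * c + cnj c * y + cnj c * M$$(k,k) * c"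
          by (simp add: Bf_add Bf_dr[OF kn] Bf_dl[OF kn] Bf_dd[OF kn] sum_dl[OF kn] cy y_def qf_Bf)
        also have "\<dots> = quad_form n M v - cnj y * y / complex_of_real d"
          using d by (simp add: c_def field_simps)
        also have "\<dots> = quad_form n M' v"
        proof -
          have "quad_form n M' v = (\<Sum>i<n. \<Sum>j<n. cnj (v$i) * M$$(i,j) * v$j - (cnj (v$i) * u$i) * (cnj (u$j) * v$j))"
            unfolding quad_form_def by (rule sum.cong, simp, rule sum.cong, simp, simp add: M'idx algebra_simps)
          also have "\<dots> = quad_form n M v - (\<Sum>i<n. cnj (v$i) * u$i) * (\<Sum>j<n. cnj (u$j) * v$j)"
            by (simp add: quad_form_def sum_subtractf sum_product)
          also have "(\<Sum>j<n. cnj (u$j) * v$j) = y / sd"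
            unfolding y_def u_def sum_divide_distrib using sd2
            by (intro sum.cong, simp, simp add: herm[OF _ kn])
          also have "(\<Sum>i<n. cnj (v$i) * u$i) = cnj y / sd"
            unfolding u_def sum_divide_distrib using cy[symmetric]
            by (simp add: sum_divide_distrib)
          finally show ?thesis using sd2 by (simp flip: sd2(1))
        qed
        finally have eq: "Bf n M (\<lambda>i. v$i + (if i = k then c else 0)) (\<lambda>i. v$i + (if i = k then c else 0)) = quad_form n M' v" .
        have "0 \<le> quad_form n M (vec n (\<lambda>i. v$i + (if i = k then c else 0)))"
          using M psd_iff vec_carrier by blast
        also have "quad_form n M (vec n (\<lambda>i. v$i + (if i = k then c else 0))) =
            Bf n M (\<lambda>i. v$i + (if i = k then c else 0)) (\<lambda>i. v$i + (if i = k then c else 0))"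
          by (simp add: quad_form_def Bf_def)
        finally show "0 \<le> quad_form n M' v" using eq by simp
      qed
      obtain r :: nat and U where U: "\<forall>l<r. U l \<in> carrier_vec n" "\<forall>i<n. \<forall>j<n. M'$$(i,j) = (\<Sum>l<r. U l $ i * cnj (U l $ j))"
        using step.IH psdM' Z' by blast
      define U' where "U' = U(r := u)"
      have "\<forall>l<Suc r. U' l \<in> carrier_vec n" using U by (auto simp: U'_def u_def less_Suc_eq)
      moreover have "\<forall>i<n. \<forall>j<n. M$$(i,j) = (\<Sum>l<Suc r. U' l $ i * cnj (U' l $ j))"
      proof (intro allI impI)
        fix i j assume ij: "i<n" "j<n"
        have "(\<Sum>l<Suc r. U' l $ i * cnj (U' l $ j)) = (\<Sum>l<r. U l $ i * cnj (U l $ j)) + u$i * cnj (u$j)"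
          by (simp add: U'_def)
        also have "\<dots> = M$$(i,j)"
        proof -
          have e1: "M'$$(i,j) = (\<Sum>l<r. U l $ i * cnj (U l $ j))" using U(2) ij by blast
          show ?thesis using M'idx[OF ij] e1 by (metis diff_add_cancel)
        qed
        finally show "M$$(i,j) = (\<Sum>l<Suc r. U' l $ i * cnj (U' l $ j))" by simp
      qed
      ultimately show ?thesis by blast
    qed
  qed
qed

lemma psd_decomp: "psd n M \<Longrightarrow> \<exists>(r::nat) U. (\<forall>l<r. U l \<in> carrier_vec n) \<and> (\<forall>i<n. \<forall>j<n. M$$(i,j) = (\<Sum>l<r. U l $ i * cnj (U l $ j)))"
  using psd_decomp_aux[of 0 n] by auto

lemma swap6: "(\<Sum>p\<in>P. \<Sum>b\<in>B. \<Sum>q\<in>P. \<Sum>b'\<in>B. \<Sum>a\<in>A. \<Sum>a'\<in>A. F p b q b' a a') =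
   (\<Sum>a\<in>A. \<Sum>b\<in>B. \<Sum>a'\<in>A. \<Sum>b'\<in>B. \<Sum>p\<in>P. \<Sum>q\<in>P. F p b q b' a a')"
  by (simp only: sum.swap[of _ A B] sum.swap[of _ A P] sum.swap[of _ B P])

definition Em :: "nat \<Rightarrow> nat \<Rightarrow> nat \<Rightarrow> complex mat" where
  "Em d a a' = mat d d (\<lambda>(i,j). if i = a \<and> j = a' then 1 else 0)"

definition choi :: "nat \<Rightarrow> nat \<Rightarrow> (complex mat \<Rightarrow> complex mat) \<Rightarrow> complex mat" where
  "choi dA dB L = mat (dA*dB) (dA*dB) (\<lambda>(K,L'). L (Em dA (K div dB) (L' div dB)) $$ (K mod dB, L' mod dB))"

definition xv :: "nat \<Rightarrow> nat \<Rightarrow> nat \<Rightarrow> complex vec \<Rightarrow> complex vec \<Rightarrow> complex vec" where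
  "xv m dA dB u w = vec (dA*dB) (\<lambda>K. \<Sum>q<m. cnj (u $ (q*dA + K div dB)) * w $ (q*dB + K mod dB))"

lemma Em_carrier[simp]: "Em d a a' \<in> carrier_mat d d" by (simp add: Em_def)

lemma pdb_div[simp]: "b < d \<Longrightarrow> (p*d+b) div d = p" for b d p :: nat
  by (simp add: add.commute[of "p*d" b])
lemma pdb_mod[simp]: "b < d \<Longrightarrow> (p*d+b) mod d = b" for b d p :: nat
  by (simp add: add.commute[of "p*d" b])
lemma pdb_less: "p < m \<Longrightarrow> b < d \<Longrightarrow> p*d+b < m*d" for b d p m :: nat
proof -
  assume "p < m" "b < d"
  then have "p*d+b < p*d+d" by simp
  also have "\<dots> = (p+1)*d" by simp
  also have "\<dots> \<le> m*d" using \<open>p<m\<close> by (intro mult_right_mono) auto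
  finally show ?thesis .
qed

lemma lin_expand:
  assumes lin: "lin_map dA dB L" and X: "X \<in> carrier_mat dA dA" and bb: "b < dB" "b' < dB"
  shows "L X $$ (b,b') = (\<Sum>a<dA. \<Sum>a'<dA. X$$(a,a') * L (Em dA a a') $$ (b,b'))"
proof -
  define XS where "XS S = mat dA dA (\<lambda>(i,j). if (i,j) \<in> S then X$$(i,j) else 0)" for S
  have carr: "\<And>Y. Y \<in> carrier_mat dA dA \<Longrightarrow> L Y \<in> carrier_mat dB dB"
   and add: "\<And>Y Z. Y \<in> carrier_mat dA dA \<Longrightarrow> Z \<in> carrier_mat dA dA \<Longrightarrow> L (Y + Z) = L Y + L Z"
   and sm: "\<And>c Y. Y \<in> carrier_mat dA dA \<Longrightarrow> L (c \<cdot>\<^sub>m Y) = c \<cdot>\<^sub>m L Y"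
    using lin unfolding lin_map_def by auto
  have main: "S \<subseteq> {..<dA} \<times> {..<dA} \<Longrightarrow> L (XS S) $$ (b,b') = (\<Sum>(a,a')\<in>S. X$$(a,a') * L (Em dA a a') $$ (b,b'))"
    if fin: "finite S" for S
    using fin
  proof (induction S rule: finite_induct)
    case empty
    have "XS {} = 0 \<cdot>\<^sub>m Em dA 0 0" by (rule eq_matI) (auto simp: XS_def Em_def)
    then have "L (XS {}) = 0 \<cdot>\<^sub>m L (Em dA 0 0)" using sm by simp
    moreover have "L (Em dA 0 0) \<in> carrier_mat dB dB" by (rule carr) simp
    ultimately show ?case using bb by simp
  next
    case (insert s S)
    obtain a a' where s: "s = (a,a')" by force
    have aa: "a < dA" "a' < dA" using insert s by auto
    have "XS (insert s S) = XS S + X$$(a,a') \<cdot>\<^sub>m Em dA a a'"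
      by (rule eq_matI) (use insert s in \<open>auto simp: XS_def Em_def\<close>)
    then have "L (XS (insert s S)) = L (XS S) + X$$(a,a') \<cdot>\<^sub>m L (Em dA a a')"
      using add sm by (simp add: XS_def)
    moreover have "L (Em dA a a') \<in> carrier_mat dB dB" by (rule carr) simp
    moreover have "L (XS S) \<in> carrier_mat dB dB" by (rule carr) (simp add: XS_def)
    ultimately have "L (XS (insert s S)) $$ (b,b') = L (XS S) $$ (b,b') + X$$(a,a') * L (Em dA a a') $$ (b,b')"
      using bb by simp
    then show ?case using insert s by simp
  qed
  have "XS ({..<dA} \<times> {..<dA}) = X" by (rule eq_matI) (use X in \<open>auto simp: XS_def\<close>)
  then have "L X $$ (b,b') = (\<Sum>(a,a')\<in>{..<dA} \<times> {..<dA}. X$$(a,a') * L (Em dA a a') $$ (b,b'))"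
    using main[of "{..<dA} \<times> {..<dA}"] by simp
  then show ?thesis by (simp add: sum.cartesian_product)
qed

lemma block_carrier[simp]: "block d M i j \<in> carrier_mat d d" by (simp add: block_def)
lemma block_idx[simp]: "a < d \<Longrightarrow> a' < d \<Longrightarrow> block d M i j $$ (a,a') = M $$ (i*d+a, j*d+a')"
  by (simp add: block_def)
lemma idt_carrier[simp]: "id_tensor m dA dB L M \<in> carrier_mat (m*dB) (m*dB)" by (simp add: id_tensor_def)
lemma idt_idx: "P < m*dB \<Longrightarrow> Q < m*dB \<Longrightarrow>
  id_tensor m dA dB L M $$ (P,Q) = L (block dA M (P div dB) (Q div dB)) $$ (P mod dB, Q mod dB)"
  by (simp add: id_tensor_def)

lemma qf_split: "quad_form (m*d) M w = (\<Sum>p<m. \<Sum>b<d. \<Sum>q<m. \<Sum>b'<d. cnj (w$(p*d+b)) * M$$(p*d+b, q*d+b') * w$(q*d+b'))"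
  unfolding quad_form_def by (simp add: sum_split)

lemma qf_idt:
  assumes lin: "lin_map dA dB L"
  shows "quad_form (m*dB) (id_tensor m dA dB L M) w =
    (\<Sum>p<m. \<Sum>b<dB. \<Sum>q<m. \<Sum>b'<dB. cnj (w$(p*dB+b)) * (\<Sum>a<dA. \<Sum>a'<dA. M$$(p*dA+a, q*dA+a') * L (Em dA a a') $$ (b,b')) * w$(q*dB+b'))"
  unfolding qf_split
  by (intro sum.cong refl, simp add: idt_idx pdb_less lin_expand[OF lin])

lemma outer_idx: "i < dim_vec u \<Longrightarrow> j < dim_vec u \<Longrightarrow> outer u $$ (i,j) = u$i * cnj (u$j)"
  by (simp add: outer_def)

lemma choi_idx: "a < dA \<Longrightarrow> b < dB \<Longrightarrow> a' < dA \<Longrightarrow> b' < dB \<Longrightarrow>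
   choi dA dB L $$ (a*dB+b, a'*dB+b') = L (Em dA a a') $$ (b,b')"
  by (simp add: choi_def pdb_less)

lemma distr3: "c * (\<Sum>a\<in>A. \<Sum>a'\<in>B. g a a') * e = (\<Sum>a\<in>A. \<Sum>a'\<in>B. c * g a a' * e)" for c :: complex
  by (simp add: sum_distrib_left sum_distrib_right)

lemma distr4: "(\<Sum>p\<in>P. f p) * c * (\<Sum>q\<in>Q. g q) = (\<Sum>p\<in>P. \<Sum>q\<in>Q. f p * c * g q)" for c :: complex
  by (simp add: sum_distrib_left sum_distrib_right, subst sum.swap, rule refl)

lemma rank1:
  assumes lin: "lin_map dA dB L" and u: "dim_vec u = m*dA"
  shows "quad_form (m*dB) (id_tensor m dA dB L (outer u)) w = quad_form (dA*dB) (choi dA dB L) (xv m dA dB u w)"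
proof -
  define F where "F p b q b' a a' = cnj (w$(p*dB+b)) * u$(p*dA+a) * cnj (u$(q*dA+a')) * L (Em dA a a') $$ (b,b') * w$(q*dB+b')"
    for p b q b' a a'
  have oi: "\<And>p q a a'. p<m \<Longrightarrow> q<m \<Longrightarrow> a<dA \<Longrightarrow> a'<dA \<Longrightarrow> outer u $$ (p*dA+a, q*dA+a') = u$(p*dA+a) * cnj (u$(q*dA+a'))"
    using outer_idx pdb_less u by metis
  have "quad_form (m*dB) (id_tensor m dA dB L (outer u)) w =
      (\<Sum>p<m. \<Sum>b<dB. \<Sum>q<m. \<Sum>b'<dB. \<Sum>a<dA. \<Sum>a'<dA. F p b q b' a a')"
    unfolding qf_idt[OF lin] distr3
    by (intro sum.cong refl, simp add: F_def oi mult_ac)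
  also have "\<dots> = (\<Sum>a<dA. \<Sum>b<dB. \<Sum>a'<dA. \<Sum>b'<dB. \<Sum>p<m. \<Sum>q<m. F p b q b' a a')"
    by (rule swap6)
  also have "\<dots> = quad_form (dA*dB) (choi dA dB L) (xv m dA dB u w)"
    unfolding qf_split[of dA dB]
    by (intro sum.cong refl, simp add: choi_idx pdb_less xv_def sum_product sum_distrib_left F_def mult_ac)
  finally show ?thesis .
qed

lemma cnj_mult_self_nonneg: "0 \<le> cnj z * z"
proof -
  have "cnj z * z = complex_of_real ((cmod z)^2)" using complex_norm_square[of z] by (simp add: mult.commute)
  then show ?thesis by (simp add: cle_iff)
qed

lemma outer_carrier: "u \<in> carrier_vec n \<Longrightarrow> outer u \<in> carrier_mat n n"
  by (simp add: outer_def)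

lemma psd_outer: assumes u: "u \<in> carrier_vec n" shows "psd n (outer u)"
  unfolding psd_iff
proof (intro conjI ballI outer_carrier[OF u])
  fix v :: "complex vec" assume "v \<in> carrier_vec n"
  have dim: "dim_vec u = n" using u by simp
  have "quad_form n (outer u) v = (\<Sum>i<n. \<Sum>j<n. (cnj (v$i) * u$i) * (cnj (u$j) * v$j))"
    unfolding quad_form_def by (intro sum.cong refl) (simp add: outer_idx dim mult_ac)
  also have "\<dots> = (\<Sum>i<n. cnj (v$i) * u$i) * (\<Sum>j<n. cnj (u$j) * v$j)"
    by (simp add: sum_product)
  also have "\<dots> = cnj (\<Sum>j<n. cnj (u$j) * v$j) * (\<Sum>j<n. cnj (u$j) * v$j)"
    by (simp add: mult.commute)
  finally have eq: "quad_form n (outer u) v = cnj (\<Sum>j<n. cnj (u$j) * v$j) * (\<Sum>j<n. cnj (u$j) * v$j)" .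
  show "0 \<le> quad_form n (outer u) v" unfolding eq by (rule cnj_mult_self_nonneg)
qed

lemma outer_idx2: "dim_vec u = m*dA \<Longrightarrow> p<m \<Longrightarrow> q<m \<Longrightarrow> a<dA \<Longrightarrow> a'<dA \<Longrightarrow>
   outer u $$ (p*dA+a, q*dA+a') = u$(p*dA+a) * cnj (u$(q*dA+a'))"
  using outer_idx pdb_less by metis

lemma lin6: "(\<Sum>p\<in>P. \<Sum>b\<in>B. \<Sum>q\<in>P. \<Sum>b'\<in>B. W1 p b * (\<Sum>a\<in>A. \<Sum>a'\<in>A. (\<Sum>k<r. g k p q a a') * C a a' b b') * W2 q b') =
  (\<Sum>k<r. \<Sum>p\<in>P. \<Sum>b\<in>B. \<Sum>q\<in>P. \<Sum>b'\<in>B. W1 p b * (\<Sum>a\<in>A. \<Sum>a'\<in>A. g k p q a a' * C a a' b b') * W2 q b')"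
  for W1 W2 :: "nat \<Rightarrow> nat \<Rightarrow> complex" and r :: nat
  by (induction r) (simp_all add: sum.distrib distrib_left distrib_right)

lemma xv_carrier[simp]: "xv m dA dB u w \<in> carrier_vec (dA*dB)" by (simp add: xv_def)

lemma choi_to_CP:
  assumes lin: "lin_map dA dB L" and J: "psd (dA*dB) (choi dA dB L)"
  shows "CP dA dB L"
  unfolding CP_def
proof (intro conjI lin allI impI)
  fix m M assume M: "psd (m*dA) M"
  obtain r :: nat and U where U: "\<forall>l<r. U l \<in> carrier_vec (m*dA)"
    "\<forall>i<m*dA. \<forall>j<m*dA. M$$(i,j) = (\<Sum>l<r. U l $ i * cnj (U l $ j))"
    using psd_decomp[OF M] by blast
  have Mi: "M$$(p*dA+a, q*dA+a') = (\<Sum>l<r. U l $ (p*dA+a) * cnj (U l $ (q*dA+a')))"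
    if "p<m" "q<m" "a<dA" "a'<dA" for p q a a'
    using U(2) pdb_less that by blast
  have dimU: "\<And>l. l < r \<Longrightarrow> dim_vec (U l) = m*dA" using U(1) by auto
  show "psd (m*dB) (id_tensor m dA dB L M)"
    unfolding psd_iff
  proof (intro conjI ballI idt_carrier)
    fix w :: "complex vec" assume w: "w \<in> carrier_vec (m*dB)"
    have "quad_form (m*dB) (id_tensor m dA dB L M) w =
       (\<Sum>p<m. \<Sum>b<dB. \<Sum>q<m. \<Sum>b'<dB. cnj (w$(p*dB+b)) * (\<Sum>a<dA. \<Sum>a'<dA.
          (\<Sum>l<r. U l $ (p*dA+a) * cnj (U l $ (q*dA+a'))) * L (Em dA a a') $$ (b,b')) * w$(q*dB+b'))"
      unfolding qf_idt[OF lin] by (intro sum.cong refl) (simp add: Mi)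
    also have "\<dots> = (\<Sum>l<r. \<Sum>p<m. \<Sum>b<dB. \<Sum>q<m. \<Sum>b'<dB. cnj (w$(p*dB+b)) * (\<Sum>a<dA. \<Sum>a'<dA.
          (U l $ (p*dA+a) * cnj (U l $ (q*dA+a'))) * L (Em dA a a') $$ (b,b')) * w$(q*dB+b'))"
      by (rule lin6)
    also have "\<dots> = (\<Sum>l<r. quad_form (m*dB) (id_tensor m dA dB L (outer (U l))) w)"
      unfolding qf_idt[OF lin] by (intro sum.cong refl) (simp add: outer_idx2 dimU)
    also have "\<dots> = (\<Sum>l<r. quad_form (dA*dB) (choi dA dB L) (xv m dA dB (U l) w))"
      by (intro sum.cong refl) (simp add: rank1[OF lin] dimU)
    finally show "0 \<le> quad_form (m*dB) (id_tensor m dA dB L M) w"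
      using J by (simp add: psd_iff sum_nonneg)
  qed
qed

lemma div_lt: "K < dA*dB \<Longrightarrow> K div dB < dA" for K dA dB :: nat
  by (simp add: less_mult_imp_div_less)

lemma xv_diag:
  assumes w: "w \<in> carrier_vec (dA*dB)"
  shows "xv dA dA dB (vec (dA*dA) (\<lambda>P. if P div dA = P mod dA then s else 0)) w = vec (dA*dB) (\<lambda>K. cnj s * w$K)"
proof (rule eq_vecI)
  show "dim_vec (xv dA dA dB (vec (dA*dA) (\<lambda>P. if P div dA = P mod dA then s else 0)) w) = dim_vec (vec (dA*dB) (\<lambda>K. cnj s * w$K))"
    by (simp add: xv_def)
  fix K assume "K < dim_vec (vec (dA*dB) (\<lambda>K. cnj s * w$K))"
  then have K: "K < dA*dB" by simp
  have Kd: "K div dB < dA" using div_lt[OF K] .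
  have "xv dA dA dB (vec (dA*dA) (\<lambda>P. if P div dA = P mod dA then s else 0)) w $ K
    = (\<Sum>q<dA. cnj (vec (dA*dA) (\<lambda>P. if P div dA = P mod dA then s else 0) $ (q*dA + K div dB)) * w $ (q*dB + K mod dB))"
    using K by (simp add: xv_def)
  also have "\<dots> = (\<Sum>q<dA. if q = K div dB then cnj s * w $ (q*dB + K mod dB) else 0)"
    by (intro sum.cong refl) (simp add: pdb_less Kd)
  also have "\<dots> = cnj s * w $ (K div dB * dB + K mod dB)"
    using Kd by simp
  also have "\<dots> = cnj s * w $ K" by simp
  finally show "xv dA dA dB (vec (dA*dA) (\<lambda>P. if P div dA = P mod dA then s else 0)) w $ K = vec (dA*dB) (\<lambda>K. cnj s * w$K) $ K"
    using K by simp
qed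

lemma qf_scale: "quad_form n M (vec n (\<lambda>K. c * w$K)) = cnj c * c * quad_form n M w"
  by (simp add: quad_form_def sum_distrib_left mult_ac)

lemma CP_to_choi:
  assumes cp: "CP dA dB L"
  shows "psd (dA*dB) (choi dA dB L)"
proof -
  have lin: "lin_map dA dB L" using cp by (simp add: CP_def)
  define om where "om = vec (dA*dA) (\<lambda>P. if P div dA = P mod dA then (1::complex) else 0)"
  have "psd (dA*dA) (outer om)" by (rule psd_outer) (simp add: om_def)
  then have P: "psd (dA*dB) (id_tensor dA dA dB L (outer om))" using cp by (simp add: CP_def)
  show ?thesis unfolding psd_iff
  proof (intro conjI ballI)
    show "choi dA dB L \<in> carrier_mat (dA*dB) (dA*dB)" by (simp add: choi_def)
    fix v :: "complex vec" assume v: "v \<in> carrier_vec (dA*dB)"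
    have "xv dA dA dB om v = v"
      unfolding om_def xv_diag[OF v] using v by (intro eq_vecI) auto
    then have "quad_form (dA*dB) (choi dA dB L) v = quad_form (dA*dB) (id_tensor dA dA dB L (outer om)) v"
      using rank1[OF lin, of om dA v] by (simp add: om_def)
    then show "0 \<le> quad_form (dA*dB) (choi dA dB L) v" using P v by (simp add: psd_iff)
  qed
qed

definition Lc :: "nat \<Rightarrow> (complex mat \<Rightarrow> complex mat) \<Rightarrow> complex \<Rightarrow> complex mat \<Rightarrow> complex mat" where
  "Lc dB N c X = c \<cdot>\<^sub>m (mtrace X \<cdot>\<^sub>m 1\<^sub>m dB) - N X"

lemma mtrace_add: "A \<in> carrier_mat n n \<Longrightarrow> B \<in> carrier_mat n n \<Longrightarrow> mtrace (A + B) = mtrace A + mtrace B"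
  by (simp add: mtrace_def sum.distrib)

lemma mtrace_smult: "A \<in> carrier_mat n n \<Longrightarrow> mtrace (c \<cdot>\<^sub>m A) = c * mtrace A"
  by (simp add: mtrace_def sum_distrib_left)

lemma mtrace_Em: "a < d \<Longrightarrow> a' < d \<Longrightarrow> mtrace (Em d a a') = (if a = a' then 1 else 0)"
  unfolding mtrace_def Em_def by (auto intro: sum.neutral)

lemma lin_carr: "lin_map dA dB N \<Longrightarrow> X \<in> carrier_mat dA dA \<Longrightarrow> N X \<in> carrier_mat dB dB"
  by (simp add: lin_map_def)

lemma lin_Lc: assumes lin: "lin_map dA dB N" shows "lin_map dA dB (Lc dB N c)"
proof -
  have 1: "\<forall>X \<in> carrier_mat dA dA. Lc dB N c X \<in> carrier_mat dB dB"
    unfolding Lc_def using minus_carrier_mat lin_carr[OF lin] by blast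
  have 2: "\<forall>X \<in> carrier_mat dA dA. \<forall>Y \<in> carrier_mat dA dA. Lc dB N c (X + Y) = Lc dB N c X + Lc dB N c Y"
  proof (intro ballI)
    fix X Y :: "complex mat" assume X: "X \<in> carrier_mat dA dA" and Y: "Y \<in> carrier_mat dA dA"
    have NX: "N X \<in> carrier_mat dB dB" using lin_carr[OF lin X] .
    have NY: "N Y \<in> carrier_mat dB dB" using lin_carr[OF lin Y] .
    have NXY: "N (X + Y) = N X + N Y" using lin X Y by (simp add: lin_map_def)
    show "Lc dB N c (X + Y) = Lc dB N c X + Lc dB N c Y"
      by (rule eq_matI) (use NX NY X Y in \<open>auto simp: Lc_def NXY mtrace_add algebra_simps\<close>)
  qed
  have 3: "\<forall>X \<in> carrier_mat dA dA. \<forall>k. Lc dB N c (k \<cdot>\<^sub>m X) = k \<cdot>\<^sub>m Lc dB N c X"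
  proof (intro ballI allI)
    fix X :: "complex mat" and k assume X: "X \<in> carrier_mat dA dA"
    have NX: "N X \<in> carrier_mat dB dB" using lin_carr[OF lin X] .
    have NkX: "N (k \<cdot>\<^sub>m X) = k \<cdot>\<^sub>m N X" using lin X by (simp add: lin_map_def)
    show "Lc dB N c (k \<cdot>\<^sub>m X) = k \<cdot>\<^sub>m Lc dB N c X"
      by (rule eq_matI) (use NX X in \<open>auto simp: Lc_def NkX mtrace_smult algebra_simps\<close>)
  qed
  show ?thesis using 1 2 3 by (simp add: lin_map_def)
qed

lemma idx_eq_iff: "(K = L) \<longleftrightarrow> (K div d = L div d \<and> K mod d = L mod d)" for K L d :: nat
  by (metis div_mult_mod_eq)

lemma choi_Lc: assumes lin: "lin_map dA dB N"
  shows "choi dA dB (Lc dB N c) = c \<cdot>\<^sub>m 1\<^sub>m (dA*dB) - choi dA dB N"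
proof (rule eq_matI)
  fix K L assume "K < dim_row (c \<cdot>\<^sub>m 1\<^sub>m (dA*dB) - choi dA dB N)" "L < dim_col (c \<cdot>\<^sub>m 1\<^sub>m (dA*dB) - choi dA dB N)"
  then have K: "K < dA*dB" and L: "L < dA*dB" by (auto simp: choi_def)
  have dB: "0 < dB" using K by (cases dB) auto
  have Kd: "K div dB < dA" "L div dB < dA" using div_lt K L by auto
  have Km: "K mod dB < dB" "L mod dB < dB" using dB by auto
  have NE: "N (Em dA (K div dB) (L div dB)) \<in> carrier_mat dB dB" by (rule lin_carr[OF lin]) simp
  show "choi dA dB (Lc dB N c) $$ (K, L) = (c \<cdot>\<^sub>m 1\<^sub>m (dA*dB) - choi dA dB N) $$ (K, L)"
    using K L Kd Km NE by (auto simp: choi_def Lc_def mtrace_Em idx_eq_iff[of K L dB])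
qed (auto simp: choi_def)

lemma unif_Lc: "(\<lambda>X. complex_of_real t \<cdot>\<^sub>m unif_chan dB X - N X) = Lc dB N (complex_of_real t / of_nat dB)"
proof
  fix X
  have "complex_of_real t \<cdot>\<^sub>m unif_chan dB X = (complex_of_real t / of_nat dB) \<cdot>\<^sub>m (mtrace X \<cdot>\<^sub>m 1\<^sub>m dB)"
    by (rule eq_matI) (auto simp: unif_chan_def)
  then show "complex_of_real t \<cdot>\<^sub>m unif_chan dB X - N X = Lc dB N (complex_of_real t / of_nat dB) X"
    by (simp add: Lc_def)
qed

lemma kron_idx: "P < dim_row A * dim_row B \<Longrightarrow> Q < dim_col A * dim_col B \<Longrightarrow>
  kron A B $$ (P,Q) = A $$ (P div dim_row B, Q div dim_col B) * B $$ (P mod dim_row B, Q mod dim_col B)"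
  by (simp add: kron_def)

lemma ptrace2_dim[simp]: "dim_row (ptrace2 m d M) = m" "dim_col (ptrace2 m d M) = m"
  by (simp_all add: ptrace2_def)
lemma idt_dim[simp]: "dim_row (id_tensor m dA dB L M) = m*dB" "dim_col (id_tensor m dA dB L M) = m*dB"
  by (simp_all add: id_tensor_def)
lemma block_dim[simp]: "dim_row (block d M i j) = d" "dim_col (block d M i j) = d"
  by (simp_all add: block_def)

lemma ptrace2_idx: "p < m \<Longrightarrow> q < m \<Longrightarrow> ptrace2 m d M $$ (p,q) = (\<Sum>b<d. M $$ (p*d+b, q*d+b))"
  by (simp add: ptrace2_def)

lemma idt_Lc:
  assumes lin: "lin_map dA dB N" and tp: "\<forall>X \<in> carrier_mat dA dA. mtrace (N X) = mtrace X"
  shows "c \<cdot>\<^sub>m kron (ptrace2 m dB (id_tensor m dA dB N psi)) (1\<^sub>m dB) - id_tensor m dA dB N psi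
       = id_tensor m dA dB (Lc dB N c) psi"
proof (rule eq_matI)
  fix P Q assume "P < dim_row (id_tensor m dA dB (Lc dB N c) psi)" "Q < dim_col (id_tensor m dA dB (Lc dB N c) psi)"
  then have P: "P < m*dB" and Q: "Q < m*dB" by (auto simp: id_tensor_def)
  have dB: "0 < dB" using P by (cases dB) auto
  have Pd: "P div dB < m" "Q div dB < m" using P Q by (simp_all add: less_mult_imp_div_less)
  have Pm: "P mod dB < dB" "Q mod dB < dB" using dB by auto
  define Bl where "Bl = block dA psi (P div dB) (Q div dB)"
  have NB: "N Bl \<in> carrier_mat dB dB" by (rule lin_carr[OF lin]) (simp add: Bl_def)
  have pt: "ptrace2 m dB (id_tensor m dA dB N psi) $$ (P div dB, Q div dB) = mtrace Bl"
  proof -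
    have "ptrace2 m dB (id_tensor m dA dB N psi) $$ (P div dB, Q div dB) = (\<Sum>b<dB. N Bl $$ (b,b))"
      using Pd by (simp add: ptrace2_idx idt_idx pdb_less Bl_def)
    also have "\<dots> = mtrace (N Bl)" using NB by (simp add: mtrace_def)
    also have "\<dots> = mtrace Bl" using tp by (simp add: Bl_def)
    finally show ?thesis .
  qed
  have dimk: "dim_row (kron (ptrace2 m dB (id_tensor m dA dB N psi)) (1\<^sub>m dB)) = m*dB"
     "dim_col (kron (ptrace2 m dB (id_tensor m dA dB N psi)) (1\<^sub>m dB)) = m*dB"
    by (simp_all add: kron_def ptrace2_def)
  have K: "kron (ptrace2 m dB (id_tensor m dA dB N psi)) (1\<^sub>m dB) $$ (P,Q) = mtrace Bl * (if P mod dB = Q mod dB then 1 else 0)"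
    using P Q Pm by (simp add: kron_idx pt)
  have idL: "id_tensor m dA dB (Lc dB N c) psi $$ (P,Q) = Lc dB N c Bl $$ (P mod dB, Q mod dB)"
    using P Q by (simp add: idt_idx Bl_def)
  have idN: "id_tensor m dA dB N psi $$ (P,Q) = N Bl $$ (P mod dB, Q mod dB)"
    using P Q by (simp add: idt_idx Bl_def)
  show "(c \<cdot>\<^sub>m kron (ptrace2 m dB (id_tensor m dA dB N psi)) (1\<^sub>m dB) - id_tensor m dA dB N psi) $$ (P, Q) =
        id_tensor m dA dB (Lc dB N c) psi $$ (P, Q)"
    using P Q Pm NB dimk by (simp add: K idL idN Lc_def)
qed (auto simp: id_tensor_def kron_def ptrace2_def)

lemma mtrace_idt: assumes lin: "lin_map dA dB L"
  shows "mtrace (id_tensor m dA dB L M) = (\<Sum>p<m. mtrace (L (block dA M p p)))"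
proof -
  have "mtrace (id_tensor m dA dB L M) = (\<Sum>p<m. \<Sum>b<dB. L (block dA M p p) $$ (b,b))"
    by (simp add: mtrace_def sum_split idt_idx pdb_less id_tensor_def)
  also have "\<dots> = (\<Sum>p<m. mtrace (L (block dA M p p)))"
    by (intro sum.cong refl) (simp add: mtrace_def carrier_matD(1)[OF lin_carr[OF lin block_carrier]])
  finally show ?thesis .
qed

lemma mtrace_blocks: "M \<in> carrier_mat (m*dA) (m*dA) \<Longrightarrow> (\<Sum>p<m. mtrace (block dA M p p)) = mtrace M"
  by (simp add: mtrace_def sum_split)

lemma mtrace_Lc: assumes lin: "lin_map dA dB N" and tp: "\<forall>X \<in> carrier_mat dA dA. mtrace (N X) = mtrace X"
  and X: "X \<in> carrier_mat dA dA"
  shows "mtrace (Lc dB N c X) = (c * of_nat dB - 1) * mtrace X"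
proof -
  have NX: "N X \<in> carrier_mat dB dB" using lin_carr[OF lin X] .
  have "mtrace (Lc dB N c X) = (\<Sum>i<dB. c * mtrace X - N X $$ (i,i))"
    using NX by (simp add: Lc_def mtrace_def)
  also have "\<dots> = of_nat dB * (c * mtrace X) - mtrace (N X)"
    using NX by (simp add: sum_subtractf mtrace_def)
  finally show ?thesis using tp X by (simp add: algebra_simps)
qed

lemma psd_trace: "psd n M \<Longrightarrow> 0 \<le> mtrace M"
  unfolding mtrace_def using psd_diag[of n M] by (auto simp: psd_iff intro!: sum_nonneg)

lemma mtrace_outer: "mtrace (outer v) = complex_of_real (\<Sum>i<dim_vec v. (cmod (v$i))^2)"
proof -
  have nsq: "\<And>z. z * cnj z = complex_of_real ((cmod z)^2)" using complex_norm_square by metis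
  show ?thesis unfolding mtrace_def outer_def by (simp add: nsq of_real_sum)
qed

lemma Tpsi_lower:
  assumes lin: "lin_map dA dB N" and tp: "\<forall>X \<in> carrier_mat dA dA. mtrace (N X) = mtrace X"
    and v: "v \<in> carrier_vec (m*dA)" and nv: "(\<Sum>i<m*dA. (cmod (v$i))^2) = 1" and dB: "dB > 0"
    and P: "psd (m*dB) (id_tensor m dA dB (Lc dB N (complex_of_real t)) (outer v))"
  shows "1 / real dB \<le> t"
proof -
  have "mtrace (id_tensor m dA dB (Lc dB N (complex_of_real t)) (outer v)) =
      (\<Sum>p<m. (complex_of_real t * of_nat dB - 1) * mtrace (block dA (outer v) p p))"
    by (simp add: mtrace_idt[OF lin_Lc[OF lin]] mtrace_Lc[OF lin tp])
  also have "\<dots> = (complex_of_real t * of_nat dB - 1) * mtrace (outer v)"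
    using v by (simp add: sum_distrib_left[symmetric] mtrace_blocks outer_carrier)
  also have "\<dots> = complex_of_real (t * real dB - 1)"
    using v nv by (simp add: mtrace_outer)
  finally have "0 \<le> complex_of_real (t * real dB - 1)" using psd_trace[OF P] by simp
  then have "1 \<le> t * real dB" by (simp add: cle_iff)
  then show ?thesis using dB by (simp add: field_simps)
qed

lemma sq_le_sum: "i < n \<Longrightarrow> (cmod (v$i))^2 \<le> (\<Sum>k<n. (cmod (v$k))^2)"
  by (rule member_le_sum) auto

lemma prod_le_sum: assumes "i < n" "j < n" shows "cmod (v$i) * cmod (v$j) \<le> (\<Sum>k<n. (cmod (v$k))^2)"
proof (cases "cmod (v$i) \<le> cmod (v$j)")
  case True
  then have "cmod (v$i) * cmod (v$j) \<le> cmod (v$j) * cmod (v$j)" by (intro mult_right_mono) auto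
  then show ?thesis using sq_le_sum[OF assms(2), of v] by (simp add: power2_eq_square)
next
  case False
  then have "cmod (v$i) * cmod (v$j) \<le> cmod (v$i) * cmod (v$i)" by (intro mult_left_mono) auto
  then show ?thesis using sq_le_sum[OF assms(1), of v] by (simp add: power2_eq_square)
qed

lemma psd_bounded: assumes J: "psd n J" shows "\<exists>s. psd n (complex_of_real s \<cdot>\<^sub>m 1\<^sub>m n - J)"
proof -
  define s where "s = (\<Sum>i<n. \<Sum>j<n. cmod (J$$(i,j)))"
  have Jc: "J \<in> carrier_mat n n" using J by (simp add: psd_iff)
  have "psd n (complex_of_real s \<cdot>\<^sub>m 1\<^sub>m n - J)"
    unfolding psd_iff
  proof (intro conjI ballI)
    show "complex_of_real s \<cdot>\<^sub>m 1\<^sub>m n - J \<in> carrier_mat n n" using Jc by (simp add: minus_carrier_mat)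
    fix v :: "complex vec" assume v: "v \<in> carrier_vec n"
    define N2 where "N2 = (\<Sum>k<n. (cmod (v$k))^2)"
    have QJ: "0 \<le> quad_form n J v" using J v by (simp add: psd_iff)
    have e1: "quad_form n (complex_of_real s \<cdot>\<^sub>m 1\<^sub>m n - J) v =
       (\<Sum>i<n. \<Sum>j<n. (if j = i then cnj (v$i) * complex_of_real s * v$i else 0) - cnj (v$i) * J$$(i,j) * v$j)"
      unfolding quad_form_def using Jc by (intro sum.cong refl) (auto simp: algebra_simps)
    also have "\<dots> = (\<Sum>i<n. cnj (v$i) * complex_of_real s * v$i) - quad_form n J v"
      by (simp add: sum_subtractf quad_form_def)
    also have "(\<Sum>i<n. cnj (v$i) * complex_of_real s * v$i) = complex_of_real (s * N2)"
    proof -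
      have "\<And>z. cnj z * z = complex_of_real ((cmod z)^2)" using complex_norm_square by (metis mult.commute)
      then have "(\<Sum>i<n. cnj (v$i) * complex_of_real s * v$i) = (\<Sum>i<n. complex_of_real s * complex_of_real ((cmod (v$i))^2))"
        by (intro sum.cong refl) (metis mult.commute mult.left_commute)
      then show ?thesis by (simp add: N2_def sum_distrib_left of_real_sum)
    qed
    finally have eq: "quad_form n (complex_of_real s \<cdot>\<^sub>m 1\<^sub>m n - J) v = complex_of_real (s * N2) - quad_form n J v" .
    have "Re (quad_form n J v) \<le> cmod (quad_form n J v)" by (rule complex_Re_le_cmod)
    also have "\<dots> \<le> (\<Sum>i<n. cmod (\<Sum>j<n. cnj (v$i) * J$$(i,j) * v$j))"
      unfolding quad_form_def by (rule norm_sum)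
    also have "\<dots> \<le> (\<Sum>i<n. \<Sum>j<n. cmod (cnj (v$i) * J$$(i,j) * v$j))"
      by (intro sum_mono norm_sum)
    also have "\<dots> \<le> (\<Sum>i<n. \<Sum>j<n. cmod (J$$(i,j)) * N2)"
    proof (intro sum_mono)
      fix i j assume "i \<in> {..<n}" "j \<in> {..<n}"
      then have "cmod (v$i) * cmod (v$j) \<le> N2" unfolding N2_def by (intro prod_le_sum) auto
      then have "cmod (J$$(i,j)) * (cmod (v$i) * cmod (v$j)) \<le> cmod (J$$(i,j)) * N2"
        by (intro mult_left_mono) auto
      then show "cmod (cnj (v$i) * J$$(i,j) * v$j) \<le> cmod (J$$(i,j)) * N2"
        by (simp add: norm_mult mult_ac)
    qed
    also have "\<dots> = s * N2" by (simp add: s_def sum_distrib_right)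
    finally have "Re (quad_form n J v) \<le> s * N2" .
    then show "0 \<le> quad_form n (complex_of_real s \<cdot>\<^sub>m 1\<^sub>m n - J) v"
      unfolding eq using QJ by (simp add: cle_iff)
  qed
  then show ?thesis by blast
qed

theorem mainTheorem13:
  fixes dA dB :: nat and N :: "complex mat \<Rightarrow> complex mat"
  assumes "dA > 0" and "dB > 0" and "CPTP dA dB N"
  shows "(\<exists>\<psi> \<in> Pure dA dA. Hmin dA dB (id_tensor dA dA dB N \<psi>) = log 2 (real dB) - Dmax_chan dA dB N)
       \<and> (\<forall>\<psi> \<in> Pure dA dA. log 2 (real dB) - Dmax_chan dA dB N \<le> Hmin dA dB (id_tensor dA dA dB N \<psi>))"
proof -
  have dA: "dA > 0" and dB: "dB > 0" using assms by auto
  have cp: "CP dA dB N" and tp: "\<forall>X \<in> carrier_mat dA dA. mtrace (N X) = mtrace X"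
    using assms(3) by (auto simp: CPTP_def)
  have lin: "lin_map dA dB N" using cp by (simp add: CP_def)
  define J where "J = choi dA dB N"
  have psdJ: "psd (dA*dB) J" unfolding J_def by (rule CP_to_choi[OF cp])
  define Tj where "Tj = {s::real. psd (dA*dB) (complex_of_real s \<cdot>\<^sub>m 1\<^sub>m (dA*dB) - J)}"
  have Tj_iff: "s \<in> Tj \<longleftrightarrow> CP dA dB (Lc dB N (complex_of_real s))" for s
  proof -
    have "s \<in> Tj \<longleftrightarrow> psd (dA*dB) (choi dA dB (Lc dB N (complex_of_real s)))"
      by (simp add: Tj_def choi_Lc[OF lin] J_def)
    also have "\<dots> \<longleftrightarrow> CP dA dB (Lc dB N (complex_of_real s))"
      using choi_to_CP[OF lin_Lc[OF lin]] CP_to_choi by blast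
    finally show ?thesis .
  qed
  define T where "T v = {t::real. loewner_le (dA*dB) (id_tensor dA dA dB N (outer v))
      (complex_of_real t \<cdot>\<^sub>m kron (ptrace2 dA dB (id_tensor dA dA dB N (outer v))) (1\<^sub>m dB))}" for v
  have T_iff: "t \<in> T v \<longleftrightarrow> psd (dA*dB) (id_tensor dA dA dB (Lc dB N (complex_of_real t)) (outer v))" for t v
  proof -
    have c1: "id_tensor dA dA dB N (outer v) \<in> carrier_mat (dA*dB) (dA*dB)" by simp
    have c2: "complex_of_real t \<cdot>\<^sub>m kron (ptrace2 dA dB (id_tensor dA dA dB N (outer v))) (1\<^sub>m dB) \<in> carrier_mat (dA*dB) (dA*dB)"
      by (simp add: kron_def)
    show ?thesis unfolding T_def loewner_le_def using c1 c2 idt_Lc[OF lin tp] by simp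
  qed
  have Tj_sub: "Tj \<subseteq> T v" if v: "v \<in> carrier_vec (dA*dA)" for v
  proof
    fix s assume "s \<in> Tj"
    then have "CP dA dB (Lc dB N (complex_of_real s))" using Tj_iff by blast
    moreover have "psd (dA*dA) (outer v)" using psd_outer[OF v] .
    ultimately show "s \<in> T v" unfolding T_iff CP_def by blast
  qed
  have T_low: "1 / real dB \<le> t" if v: "v \<in> carrier_vec (dA*dA)" "(\<Sum>i<dA*dA. (cmod (v$i))^2) = 1" and t: "t \<in> T v" for v t
    using Tpsi_lower[OF lin tp v dB] t T_iff by blast
  define sq where "sq = complex_of_real (1 / sqrt (real dA))"
  define vm where "vm = vec (dA*dA) (\<lambda>P. if P div dA = P mod dA then sq else 0)"
  have vm_c: "vm \<in> carrier_vec (dA*dA)" by (simp add: vm_def)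
  have vm_n: "(\<Sum>i<dA*dA. (cmod (vm$i))^2) = 1"
  proof -
    have cs: "cmod sq = 1 / sqrt (real dA)" unfolding sq_def norm_of_real by simp
    have cs2: "(cmod sq)^2 = 1 / real dA" unfolding cs by (simp add: power_divide)
    have "(\<Sum>i<dA*dA. (cmod (vm$i))^2) = (\<Sum>q<dA. \<Sum>a<dA. if q = a then 1 / real dA else 0)"
      unfolding sum_split by (intro sum.cong refl) (simp add: vm_def pdb_less cs2)
    also have "\<dots> = (\<Sum>q<dA. 1 / real dA)" by (intro sum.cong refl) simp
    also have "\<dots> = 1" using dA by simp
    finally show ?thesis .
  qed
  have Tvm: "T vm = Tj"
  proof
    show "Tj \<subseteq> T vm" using Tj_sub[OF vm_c] .
    show "T vm \<subseteq> Tj"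
    proof
      fix t assume "t \<in> T vm"
      then have P: "psd (dA*dB) (id_tensor dA dA dB (Lc dB N (complex_of_real t)) (outer vm))" using T_iff by blast
      have "psd (dA*dB) (choi dA dB (Lc dB N (complex_of_real t)))"
        unfolding psd_iff
      proof (intro conjI ballI)
        show "choi dA dB (Lc dB N (complex_of_real t)) \<in> carrier_mat (dA * dB) (dA * dB)" by (simp add: choi_def)
        fix w :: "complex vec" assume w: "w \<in> carrier_vec (dA*dB)"
        have "quad_form (dA*dB) (id_tensor dA dA dB (Lc dB N (complex_of_real t)) (outer vm)) w
           = quad_form (dA*dB) (choi dA dB (Lc dB N (complex_of_real t))) (xv dA dA dB vm w)"
          by (rule rank1[OF lin_Lc[OF lin]]) (simp add: vm_def)
        also have "\<dots> = cnj (cnj sq) * cnj sq * quad_form (dA*dB) (choi dA dB (Lc dB N (complex_of_real t))) w"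
          unfolding vm_def xv_diag[OF w] qf_scale ..
        also have "cnj (cnj sq) * cnj sq = complex_of_real (1 / real dA)"
          using dA by (simp add: sq_def flip: of_real_mult)
        finally have eq: "quad_form (dA*dB) (id_tensor dA dA dB (Lc dB N (complex_of_real t)) (outer vm)) w
           = complex_of_real (1 / real dA) * quad_form (dA*dB) (choi dA dB (Lc dB N (complex_of_real t))) w" .
        have "0 \<le> complex_of_real (1 / real dA) * quad_form (dA*dB) (choi dA dB (Lc dB N (complex_of_real t))) w"
        proof -
          have "0 \<le> quad_form (dA*dB) (id_tensor dA dA dB (Lc dB N (complex_of_real t)) (outer vm)) w"
            using P w psd_iff by blast
          then show ?thesis using eq by metis
        qed
        then show "0 \<le> quad_form (dA*dB) (choi dA dB (Lc dB N (complex_of_real t))) w"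
          using dA by (auto simp: cle_iff zero_le_divide_iff)
      qed
      then show "t \<in> Tj" using Tj_iff choi_to_CP[OF lin_Lc[OF lin]] by blast
    qed
  qed
  have Tj_low: "\<And>s. s \<in> Tj \<Longrightarrow> 1 / real dB \<le> s" using T_low[OF vm_c vm_n] Tvm by blast
  obtain s0 where s0: "s0 \<in> Tj" using psd_bounded[OF psdJ] unfolding Tj_def by blast
  have bddTj: "bdd_below Tj" by (rule bdd_belowI[where m="1/real dB"]) (rule Tj_low)
  define c where "c = Inf Tj"
  have c_low: "1 / real dB \<le> c" unfolding c_def using s0 Tj_low by (intro cInf_greatest) auto
  have c_pos: "0 < c" using c_low dB by (smt (verit) divide_pos_pos of_nat_0_less_iff)
  define S where "S = {t::real. t \<ge> 0 \<and> CP dA dB (\<lambda>X. complex_of_real t \<cdot>\<^sub>m unif_chan dB X - N X)}"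
  have S_iff: "t \<in> S \<longleftrightarrow> t \<ge> 0 \<and> t / real dB \<in> Tj" for t
    unfolding S_def Tj_iff unif_Lc by simp
  have h0: "0 < 1 / real dB" using dB by simp
  have Tj_nn: "\<And>s. s \<in> Tj \<Longrightarrow> 0 \<le> s" using Tj_low h0 by (meson less_le_trans less_imp_le)
  have S_ne: "real dB * s0 \<in> S" using s0 Tj_nn[OF s0] dB by (simp add: S_iff)
  have bddS: "bdd_below S" by (rule bdd_belowI[where m=0]) (simp add: S_iff)
  have InfS: "Inf S = real dB * c"
  proof (rule antisym)
    have "Inf S / real dB \<le> c" unfolding c_def
    proof (rule cInf_greatest)
      show "Tj \<noteq> {}" using s0 by blast
      fix s assume s: "s \<in> Tj"
      have "real dB * s \<in> S" using s Tj_nn[OF s] dB by (simp add: S_iff)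
      then have "Inf S \<le> real dB * s" using bddS by (rule cInf_lower)
      then show "Inf S / real dB \<le> s" using dB by (simp add: field_simps)
    qed
    then show "Inf S \<le> real dB * c" using dB by (simp add: field_simps)
  next
    show "real dB * c \<le> Inf S"
    proof (rule cInf_greatest)
      show "S \<noteq> {}" using S_ne by blast
      fix t assume t: "t \<in> S"
      then have "c \<le> t / real dB" unfolding c_def using bddTj by (intro cInf_lower) (auto simp: S_iff)
      then show "real dB * c \<le> t" using dB by (simp add: field_simps)
    qed
  qed
  have LHS: "log 2 (real dB) - Dmax_chan dA dB N = - log 2 c"
  proof -
    have "Dmax_chan dA dB N = log 2 (Inf S)" by (simp add: Dmax_chan_def S_def)
    also have "\<dots> = log 2 (real dB) + log 2 c" using InfS dB c_pos by (simp add: log_mult)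
    finally show ?thesis by simp
  qed
  have Hm: "Hmin dA dB (id_tensor dA dA dB N (outer v)) = - log 2 (Inf (T v))" for v
    by (simp add: Hmin_def Dmax_def T_def)
  show ?thesis
  proof (intro conjI ballI)
    show "\<exists>\<psi> \<in> Pure dA dA. Hmin dA dB (id_tensor dA dA dB N \<psi>) = log 2 (real dB) - Dmax_chan dA dB N"
    proof (intro bexI)
      show "outer vm \<in> Pure dA dA" using vm_c vm_n by (auto simp: Pure_def)
      show "Hmin dA dB (id_tensor dA dA dB N (outer vm)) = log 2 (real dB) - Dmax_chan dA dB N"
        using Hm[of vm] Tvm LHS c_def by simp
    qed
  next
    fix psi assume "psi \<in> Pure dA dA"
    then obtain v where v: "psi = outer v" "v \<in> carrier_vec (dA*dA)" "(\<Sum>i<dA*dA. (cmod (v$i))^2) = 1"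
      by (auto simp: Pure_def)
    have ne: "T v \<noteq> {}" using s0 Tj_sub[OF v(2)] by blast
    have lowv: "\<And>t. t \<in> T v \<Longrightarrow> 1 / real dB \<le> t" using T_low[OF v(2,3)] by blast
    have bddv: "bdd_below (T v)" by (rule bdd_belowI[where m="1/real dB"]) (rule lowv)
    have i1: "1 / real dB \<le> Inf (T v)" using ne lowv by (intro cInf_greatest) auto
    have i2: "Inf (T v) \<le> c" unfolding c_def
    proof (rule cInf_greatest)
      show "Tj \<noteq> {}" using s0 by blast
      fix s assume "s \<in> Tj"
      then have "s \<in> T v" using Tj_sub[OF v(2)] by blast
      then show "Inf (T v) \<le> s" using bddv by (rule cInf_lower)
    qed
    have pos: "0 < Inf (T v)" using i1 dB by (smt (verit) divide_pos_pos of_nat_0_less_iff)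
    have "log 2 (Inf (T v)) \<le> log 2 c" using i2 pos by simp
    then show "log 2 (real dB) - Dmax_chan dA dB N \<le> Hmin dA dB (id_tensor dA dA dB N psi)"
      using LHS Hm[of v] v(1) by simp
  qed
qed

end
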